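(* Fix any discount factor $\gamma\in(0,1)$. There exist a finite deterministic Markov decision process with discount $\gamma$, a finite dataset $\mathcal{D}$ of transitions $(s,a,r,s')$ generated in this MDP, and a Q-function parametrization $Q_\theta(s,a)$ given by a one-hidden-layer ReLU neural network (taking a real-valued state feature and a one-hot action encoding as input, some of whose weights may be held fixed, with trainable parameters $\theta$), together with an initialization $\theta_0$, such that: (i) $\mathcal{D}$ contains every transition along the optimal trajectory from the initial state, but does not contain all state–action pairs; (ii) for every learning rate $\alpha>0$, the gradient-descent Q-learning iterates $\theta_{k+1}=\theta_k-\alpha\,\nabla_\theta \mathcal{L}_{\theta_k}(\theta)\big|_{\theta=\theta_k}$ satisfy $\|\theta_k\|\to\infty$, and the Q-value $Q_{\theta_k}(s,a)$ of some state–action pair tends to $+\infty$ as $k\to\infty$.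
   Context: The Q-learning loss with target parameters $\theta'$ is $\mathcal{L}_{\theta'}(\theta)=\sum_{(s,a,r,s')\in\mathcal{D}}\big(Q_\theta(s,a)-r-\gamma\max_{a'}Q_{\theta'}(s',a')\big)^2$, where the bootstrap term $\max_{a'}Q_{\theta'}(s',a')$ is taken to be $0$ when $s'$ is terminal, and the gradient is taken with respect to $\theta$ only (the target parameters $\theta'$ are treated as constants and are set equal to the current iterate $\theta_k$ at each step). A transition $(s,a,r,s')$ records that taking action $a$ in state $s$ yields reward $r$ and next state $s'$. *)

theory Defs
  imports "HOL-Analysis.Analysis"
begin

text \<open>States are 0..<nS, actions 0..<nA. P s a is the (deterministic) next state,
  R s a the reward, T the set of terminal states, s0 the initial state.\<close>

definition finite_det_mdp ::
  "nat \<Rightarrow> nat \<Rightarrow> (nat \<Rightarrow> nat \<Rightarrow> nat) \<Rightarrow> (nat \<Rightarrow> nat \<Rightarrow> real) \<Rightarrow> nat set \<Rightarrow> nat \<Rightarrow> bool"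
where
  "finite_det_mdp nS nA P R T s0 \<longleftrightarrow>
     0 < nA \<and> s0 < nS \<and> T \<subseteq> {..<nS} \<and> (\<forall>s<nS. \<forall>a<nA. P s a < nS)"

definition is_Qstar ::
  "nat \<Rightarrow> nat \<Rightarrow> (nat \<Rightarrow> nat \<Rightarrow> nat) \<Rightarrow> (nat \<Rightarrow> nat \<Rightarrow> real) \<Rightarrow> nat set \<Rightarrow> real
    \<Rightarrow> (nat \<Rightarrow> nat \<Rightarrow> real) \<Rightarrow> bool"
where
  "is_Qstar nS nA P R T \<gamma> Q \<longleftrightarrow>
     (\<forall>s<nS. \<forall>a<nA. Q s a = R s a +
        \<gamma> * (if P s a \<in> T then 0 else Max ((\<lambda>b. Q (P s a) b) ` {..<nA})))"

definition optimal_action :: "nat \<Rightarrow> (nat \<Rightarrow> nat \<Rightarrow> real) \<Rightarrow> nat \<Rightarrow> nat \<Rightarrow> bool" where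
  "optimal_action nA Q s a \<longleftrightarrow> a < nA \<and> Q s a = Max (Q s ` {..<nA})"

inductive_set opt_states ::
  "nat \<Rightarrow> (nat \<Rightarrow> nat \<Rightarrow> nat) \<Rightarrow> nat set \<Rightarrow> nat \<Rightarrow> (nat \<Rightarrow> nat \<Rightarrow> real) \<Rightarrow> nat set"
  for nA P T s0 Q
where
  init: "s0 \<notin> T \<Longrightarrow> s0 \<in> opt_states nA P T s0 Q"
| step: "s \<in> opt_states nA P T s0 Q \<Longrightarrow> optimal_action nA Q s a \<Longrightarrow> P s a \<notin> T
           \<Longrightarrow> P s a \<in> opt_states nA P T s0 Q"

definition relu :: "real \<Rightarrow> real" where
  "relu z = max 0 z"

text \<open>W j 0 is the weight of hidden unit j on the feature, W j (Suc b) its weight on the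
  b-th one-hot coordinate, c j its bias, V j the output weight, d the output bias.\<close>

definition relu_net ::
  "nat \<Rightarrow> nat \<Rightarrow> (nat \<Rightarrow> nat \<Rightarrow> real) \<Rightarrow> (nat \<Rightarrow> real) \<Rightarrow> (nat \<Rightarrow> real) \<Rightarrow> real
     \<Rightarrow> real \<Rightarrow> nat \<Rightarrow> real"
where
  "relu_net m nA W c V d x a =
     (\<Sum>j<m. V j * relu (W j 0 * x + (\<Sum>b<nA. W j (Suc b) * (if a = b then 1 else 0)) + c j)) + d"

text \<open>Weight slots of the network; each slot is either trainable (equal to a coordinate
  of the parameter vector theta) or held fixed.\<close>

datatype wslot = SW nat nat | SC nat | SV nat | SD

definition valid_slot :: "nat \<Rightarrow> nat \<Rightarrow> wslot \<Rightarrow> bool" where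
  "valid_slot m nA sl = (case sl of SW j i \<Rightarrow> j < m \<and> i \<le> nA | SC j \<Rightarrow> j < m | SV j \<Rightarrow> j < m | SD \<Rightarrow> True)"

definition valid_trainable :: "nat \<Rightarrow> nat \<Rightarrow> nat \<Rightarrow> (nat \<Rightarrow> wslot) \<Rightarrow> bool" where
  "valid_trainable m nA p tr \<longleftrightarrow> inj_on tr {..<p} \<and> (\<forall>i<p. valid_slot m nA (tr i))"

definition wval :: "nat \<Rightarrow> (nat \<Rightarrow> wslot) \<Rightarrow> (wslot \<Rightarrow> real) \<Rightarrow> (nat \<Rightarrow> real) \<Rightarrow> wslot \<Rightarrow> real" where
  "wval p tr fx \<theta> sl = (if sl \<in> tr ` {..<p} then \<theta> (inv_into {..<p} tr sl) else fx sl)"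

definition Qnet ::
  "nat \<Rightarrow> nat \<Rightarrow> nat \<Rightarrow> (nat \<Rightarrow> wslot) \<Rightarrow> (wslot \<Rightarrow> real) \<Rightarrow> (nat \<Rightarrow> real)
     \<Rightarrow> (nat \<Rightarrow> real) \<Rightarrow> nat \<Rightarrow> nat \<Rightarrow> real"
where
  "Qnet m nA p tr fx \<phi> \<theta> s a =
     relu_net m nA (\<lambda>j i. wval p tr fx \<theta> (SW j i)) (\<lambda>j. wval p tr fx \<theta> (SC j))
       (\<lambda>j. wval p tr fx \<theta> (SV j)) (wval p tr fx \<theta> SD) (\<phi> s) a"

text \<open>Loss with target parameters th' evaluated at th; Q is the parametrized Q-function.\<close>

definition qloss ::
  "((nat \<Rightarrow> real) \<Rightarrow> nat \<Rightarrow> nat \<Rightarrow> real) \<Rightarrow> nat \<Rightarrow> nat set \<Rightarrow> real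
    \<Rightarrow> (nat \<times> nat \<times> real \<times> nat) set \<Rightarrow> (nat \<Rightarrow> real) \<Rightarrow> (nat \<Rightarrow> real) \<Rightarrow> real"
where
  "qloss Q nA T \<gamma> D th' th =
     (\<Sum>(s, a, r, s') \<in> D.
        (Q th s a - r - \<gamma> * (if s' \<in> T then 0 else Max ((\<lambda>a'. Q th' s' a') ` {..<nA})))\<^sup>2)"

definition gd_qlearning_seq ::
  "((nat \<Rightarrow> real) \<Rightarrow> (nat \<Rightarrow> real) \<Rightarrow> real) \<Rightarrow> nat \<Rightarrow> real \<Rightarrow> (nat \<Rightarrow> real)
     \<Rightarrow> (nat \<Rightarrow> nat \<Rightarrow> real) \<Rightarrow> bool"
where
  "gd_qlearning_seq L p \<alpha> \<theta>0 th \<longleftrightarrow>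
     th 0 = \<theta>0 \<and>
     (\<forall>k. \<forall>i<p. \<exists>g. ((\<lambda>t. L (th k) ((th k)(i := t))) has_real_derivative g) (at (th k i))
                  \<and> th (Suc k) i = th k i - \<alpha> * g)"

definition param_norm :: "nat \<Rightarrow> (nat \<Rightarrow> real) \<Rightarrow> real" where
  "param_norm p \<theta> = sqrt (\<Sum>i<p. (\<theta> i)\<^sup>2)"

end

theory Submission
  imports Defs
begin

definition fxG :: "real \<Rightarrow> wslot \<Rightarrow> real" where
  "fxG g sl = (case sl of SW j i \<Rightarrow> (if i = 0 then 1 else if i = 2 then 2 / g else 0) | _ \<Rightarrow> 0)"

definition phiG :: "nat \<Rightarrow> real" where
  "phiG s = (if s = 0 then 1 else 0)"

lemma Qnet_eq:
  "Qnet 1 2 1 (\<lambda>_. SV 0) (fxG g) phiG \<theta> s a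
     = \<theta> 0 * relu (phiG s + (if a = 1 then 2 / g else 0))"
proof -
  have im: "(\<lambda>_. SV 0) ` {..<(1::nat)} = {SV 0}" by auto
  have inv: "inv_into {..<(1::nat)} (\<lambda>_. SV 0) (SV 0) = 0"
    by (rule inv_into_f_eq) (auto simp: inj_on_def)
  have wsw: "wval 1 (\<lambda>_. SV 0) (fxG g) \<theta> (SW j i) = fxG g (SW j i)" for j i
    by (auto simp: wval_def)
  have wsc: "wval 1 (\<lambda>_. SV 0) (fxG g) \<theta> (SC j) = 0" for j
    by (auto simp: wval_def fxG_def)
  have wsd: "wval 1 (\<lambda>_. SV 0) (fxG g) \<theta> SD = 0"
    by (auto simp: wval_def fxG_def)
  have wsv: "wval 1 (\<lambda>_. SV 0) (fxG g) \<theta> (SV 0) = \<theta> 0"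
    unfolding wval_def im inv by simp
  have wsv': "wval (Suc 0) (\<lambda>_. SV 0) (fxG g) \<theta> (SV 0) = \<theta> 0"
    using wsv by simp
  have "(\<Sum>b<2::nat. wval 1 (\<lambda>_. SV 0) (fxG g) \<theta> (SW 0 (Suc b)) * (if a = b then 1 else 0))
        = (if a = 1 then 2 / g else 0)"
    unfolding wsw by (simp add: numeral_2_eq_2 fxG_def)
  then show ?thesis
    unfolding Qnet_def relu_net_def
    unfolding wsw wsc wsd by (simp add: fxG_def wsv')
qed

lemma pow_top: "1 < (x::real) \<Longrightarrow> filterlim (\<lambda>k. x ^ k) at_top sequentially"
  unfolding filterlim_at_top
  by (metis (mono_tags, lifting) Archimedean_eventually_pow eventually_mono less_imp_le)

theorem mainTheorem1:
  fixes \<gamma> :: real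
  assumes "0 < \<gamma>" and "\<gamma> < 1"
  shows "\<exists>(nS::nat) (nA::nat) (P::nat \<Rightarrow> nat \<Rightarrow> nat) (R::nat \<Rightarrow> nat \<Rightarrow> real) (T::nat set) (s0::nat)
           (D::(nat \<times> nat \<times> real \<times> nat) set)
           (m::nat) (p::nat) (tr::nat \<Rightarrow> wslot) (fx::wslot \<Rightarrow> real) (\<phi>::nat \<Rightarrow> real)
           (\<theta>0::nat \<Rightarrow> real).
     finite_det_mdp nS nA P R T s0 \<and>
     finite D \<and>
     (\<forall>(s, a, r, s') \<in> D. s < nS \<and> s \<notin> T \<and> a < nA \<and> r = R s a \<and> s' = P s a) \<and>
     valid_trainable m nA p tr \<and>
     (\<forall>Q. is_Qstar nS nA P R T \<gamma> Q \<longrightarrow>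
        (\<forall>s \<in> opt_states nA P T s0 Q. \<forall>a. optimal_action nA Q s a \<longrightarrow> (s, a, R s a, P s a) \<in> D)) \<and>
     (\<exists>s<nS. s \<notin> T \<and> (\<exists>a<nA. \<forall>r s'. (s, a, r, s') \<notin> D)) \<and>
     (\<forall>\<alpha>>0. \<exists>th. gd_qlearning_seq (qloss (Qnet m nA p tr fx \<phi>) nA T \<gamma> D) p \<alpha> \<theta>0 th \<and>
        filterlim (\<lambda>k. param_norm p (th k)) at_top sequentially \<and>
        (\<exists>s<nS. \<exists>a<nA. filterlim (\<lambda>k. Qnet m nA p tr fx \<phi> (th k) s a) at_top sequentially))"
proof -
  define P :: "nat \<Rightarrow> nat \<Rightarrow> nat" where "P = (\<lambda>s a. if s = 0 then 1 else 2)"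
  define R :: "nat \<Rightarrow> nat \<Rightarrow> real" where
    "R = (\<lambda>s a. if s = 0 then (if a = 0 then 0 else -1) else if s = 1 then (if a = 0 then 1 else 0) else 0)"
  define D :: "(nat \<times> nat \<times> real \<times> nat) set" where "D = {(0,0,0,1),(1,0,1,2)}"
  define T :: "nat set" where "T = {2}"
  have mdp: "finite_det_mdp 3 2 P R T 0"
    by (simp add: finite_det_mdp_def P_def T_def)
  have Dok: "\<forall>(s, a, r, s') \<in> D. s < 3 \<and> s \<notin> T \<and> a < 2 \<and> r = R s a \<and> s' = P s a"
    by (simp add: D_def T_def R_def P_def)
  have vt: "valid_trainable 1 2 1 (\<lambda>_. SV 0)"
    by (simp add: valid_trainable_def valid_slot_def inj_on_def)
  have opt: "\<forall>Q. is_Qstar 3 2 P R T \<gamma> Q \<longrightarrow>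
        (\<forall>s \<in> opt_states 2 P T 0 Q. \<forall>a. optimal_action 2 Q s a \<longrightarrow> (s, a, R s a, P s a) \<in> D)"
  proof (intro allI impI ballI)
    fix Q s a
    assume q: "is_Qstar 3 2 P R T \<gamma> Q" and s: "s \<in> opt_states 2 P T 0 Q"
       and oa: "optimal_action 2 Q s a"
    have two: "{..<2::nat} = {0,1}" by auto
    have q10: "Q 1 0 = 1" and q11: "Q 1 1 = 0"
      using q by (auto simp: is_Qstar_def P_def R_def T_def)
    have mx: "Max ((\<lambda>b. Q 1 b) ` {..<2}) = 1" using q10 q11 by (simp add: two)
    have q00: "Q 0 0 = \<gamma>" and q01: "Q 0 1 = \<gamma> - 1"
      using q mx by (auto simp: is_Qstar_def P_def R_def T_def)
    have m0: "Max (Q 0 ` {..<2}) = \<gamma>" using q00 q01 by (simp add: two)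
    have m1: "Max (Q 1 ` {..<2}) = 1" using q10 q11 by (simp add: two)
    have a0: "s = 0 \<or> s = 1 \<Longrightarrow> a = 0"
      using oa q00 q01 q10 q11 m0 m1 unfolding optimal_action_def
      by (auto simp: less_Suc_eq numeral_2_eq_2)
    have "s = 0 \<or> s = 1" using s
    proof induction
      case init then show ?case by simp
    next
      case (step s a) then show ?case by (auto simp: P_def T_def)
    qed
    then show "(s, a, R s a, P s a) \<in> D" using a0
      by (auto simp: D_def R_def P_def)
  qed
  have miss: "\<exists>s<3. s \<notin> T \<and> (\<exists>a<2. \<forall>r s'. (s, a, r, s') \<notin> D)"
    by (rule exI[of _ 0], simp add: T_def, rule exI[of _ 1]) (auto simp: D_def)
  have gd: "\<forall>\<alpha>>0. \<exists>th. gd_qlearning_seq (qloss (Qnet 1 2 1 (\<lambda>_. SV 0) (fxG \<gamma>) phiG) 2 T \<gamma> D) 1 \<alpha> (\<lambda>_. 1) th \<and>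
        filterlim (\<lambda>k. param_norm 1 (th k)) at_top sequentially \<and>
        (\<exists>s<3. \<exists>a<2. filterlim (\<lambda>k. Qnet 1 2 1 (\<lambda>_. SV 0) (fxG \<gamma>) phiG (th k) s a) at_top sequentially)"
  proof (intro allI impI)
    fix \<alpha> :: real assume ap: "0 < \<alpha>"
    define th :: "nat \<Rightarrow> nat \<Rightarrow> real" where "th = (\<lambda>k _. (1 + 2 * \<alpha>) ^ k)"
    have pos: "0 < th k 0" for k using ap by (simp add: th_def)
    have two: "{..<2::nat} = {0,1}" by auto
    have L: "qloss (Qnet 1 2 1 (\<lambda>_. SV 0) (fxG \<gamma>) phiG) 2 T \<gamma> D th' t
       = (t 0 - \<gamma> * max 0 (th' 0 * (2 / \<gamma>)))\<^sup>2 + 1" for th' t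
      unfolding qloss_def Qnet_eq using assms by (simp add: D_def T_def phiG_def relu_def two)
    have tl: "filterlim (\<lambda>k. (1 + 2 * \<alpha>) ^ k) at_top sequentially"
      by (rule pow_top) (use ap in simp)
    have "gd_qlearning_seq (qloss (Qnet 1 2 1 (\<lambda>_. SV 0) (fxG \<gamma>) phiG) 2 T \<gamma> D) 1 \<alpha> (\<lambda>_. 1) th"
      unfolding gd_qlearning_seq_def
    proof (intro conjI allI impI)
      show "th 0 = (\<lambda>_. 1)" by (simp add: th_def)
    next
      fix k i :: nat assume "i < 1"
      then have i0: "i = 0" by simp
      define M where "M = \<gamma> * max 0 (th k 0 * (2 / \<gamma>))"
      have M: "M = 2 * th k 0" using pos[of k] assms by (simp add: M_def)
      have fe: "(\<lambda>t. qloss (Qnet 1 2 1 (\<lambda>_. SV 0) (fxG \<gamma>) phiG) 2 T \<gamma> D (th k) ((th k)(i := t)))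
              = (\<lambda>t. (t - M)\<^sup>2 + 1)"
        unfolding L i0 M_def by simp
      have d: "((\<lambda>t. (t - M)\<^sup>2 + 1) has_real_derivative 2 * (th k 0 - M)) (at (th k 0))"
        by (auto intro!: derivative_eq_intros)
      show "\<exists>g. ((\<lambda>t. qloss (Qnet 1 2 1 (\<lambda>_. SV 0) (fxG \<gamma>) phiG) 2 T \<gamma> D (th k) ((th k)(i := t)))
               has_real_derivative g) (at (th k i)) \<and> th (Suc k) i = th k i - \<alpha> * g"
        unfolding fe
      proof (intro exI conjI)
        show "((\<lambda>t. (t - M)\<^sup>2 + 1) has_real_derivative 2 * (th k 0 - M)) (at (th k i))"
          using d i0 by simp
        show "th (Suc k) i = th k i - \<alpha> * (2 * (th k 0 - M))"
          by (simp add: i0 M th_def algebra_simps)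
      qed
    qed
    moreover have "filterlim (\<lambda>k. param_norm 1 (th k)) at_top sequentially"
    proof -
      have "param_norm 1 (th k) = (1 + 2 * \<alpha>) ^ k" for k
        using pos[of k] by (simp add: param_norm_def th_def)
      then show ?thesis using tl by simp
    qed
    moreover have "filterlim (\<lambda>k. Qnet 1 2 1 (\<lambda>_. SV 0) (fxG \<gamma>) phiG (th k) 0 0) at_top sequentially"
      unfolding Qnet_eq using tl by (simp add: phiG_def relu_def th_def)
    ultimately show "\<exists>th. gd_qlearning_seq (qloss (Qnet 1 2 1 (\<lambda>_. SV 0) (fxG \<gamma>) phiG) 2 T \<gamma> D) 1 \<alpha> (\<lambda>_. 1) th \<and>
        filterlim (\<lambda>k. param_norm 1 (th k)) at_top sequentially \<and>
        (\<exists>s<3. \<exists>a<2. filterlim (\<lambda>k. Qnet 1 2 1 (\<lambda>_. SV 0) (fxG \<gamma>) phiG (th k) s a) at_top sequentially)"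
      by (intro exI[of _ th] conjI) (auto intro!: exI[of _ 0])
  qed
  have "finite D" by (simp add: D_def)
  then show ?thesis using mdp Dok vt opt miss gd by blast
qed

end
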